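(* Let $p\neq\operatorname{char}k_0$ be a prime and $n\geq1$. Let $T\subset\operatorname{PGL}_{p^n}$ be a split maximal torus with root system $\Phi\subset X(T)$ and Weyl group $W$. There exists a surjective homomorphism $\varepsilon:X(T)\to\mathbb{F}_p^n$ such that $\varepsilon(\alpha)\neq0$ for all $\alpha\in\Phi$, $X(T)^{W(\varepsilon)_p}=\{0\}$ for a Sylow $p$-subgroup $W(\varepsilon)_p$ of $W(\varepsilon)$, and $$\operatorname{Rank}(W(\varepsilon),X(T);p)\geq n\,p^n.$$
   Context: $\operatorname{PGL}_{p^n}$ is over a field $k_0$. $W(\varepsilon)=\{w\in W:\varepsilon(w.\chi)=\varepsilon(\chi)\text{ for all }\chi\in X(T)\}$. For a finite group $S$ acting on a finitely generated abelian group $\mathcal{U}$ with Sylow $p$-subgroup $S_p$, $\operatorname{Rank}(S,\mathcal{U};p)$ is the minimal size of an $S_p$-invariant subset of $\mathcal{U}$ generating a subgroup of finite index prime to $p$. *)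

theory Defs
  imports "HOL-Algebra.Sym_Groups" "HOL-Computational_Algebra.Primes"
begin

text \<open>Character lattice of the split diagonal maximal torus T of PGL_N:
  X(T) = {chi in Z^N : sum of coordinates = 0}, coordinates indexed by 1..N,
  represented as functions nat => int vanishing outside 1..N.\<close>
definition charX :: "nat \<Rightarrow> (nat \<Rightarrow> int) set" where
  "charX N = {\<chi>. (\<forall>i. i \<notin> {1..N} \<longrightarrow> \<chi> i = 0) \<and> (\<Sum>i=1..N. \<chi> i) = 0}"

definition roots :: "nat \<Rightarrow> (nat \<Rightarrow> int) set" where
  "roots N = {(\<lambda>k. (if k = i then 1 else 0) - (if k = j then 1 else 0)) | i j.
                 i \<in> {1..N} \<and> j \<in> {1..N} \<and> i \<noteq> j}"

definition wact :: "(nat \<Rightarrow> nat) \<Rightarrow> (nat \<Rightarrow> int) \<Rightarrow> (nat \<Rightarrow> int)" where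
  "wact w \<chi> = \<chi> \<circ> Hilbert_Choice.inv w"

definition Fp_vec :: "nat \<Rightarrow> nat \<Rightarrow> (nat \<Rightarrow> int) set" where
  "Fp_vec p n = {v. (\<forall>i. (i \<in> {1..n} \<longrightarrow> 0 \<le> v i \<and> v i < int p) \<and> (i \<notin> {1..n} \<longrightarrow> v i = 0))}"

definition Fp_add :: "nat \<Rightarrow> (nat \<Rightarrow> int) \<Rightarrow> (nat \<Rightarrow> int) \<Rightarrow> (nat \<Rightarrow> int)" where
  "Fp_add p v w = (\<lambda>i. (v i + w i) mod int p)"

definition is_hom_to_Fp :: "nat \<Rightarrow> nat \<Rightarrow> nat \<Rightarrow> ((nat \<Rightarrow> int) \<Rightarrow> (nat \<Rightarrow> int)) \<Rightarrow> bool" where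
  "is_hom_to_Fp N p n \<epsilon> \<longleftrightarrow>
     (\<forall>\<chi>\<in>charX N. \<epsilon> \<chi> \<in> Fp_vec p n) \<and>
     (\<forall>\<chi>\<in>charX N. \<forall>\<psi>\<in>charX N. \<epsilon> (\<lambda>i. \<chi> i + \<psi> i) = Fp_add p (\<epsilon> \<chi>) (\<epsilon> \<psi>))"

definition Weps :: "nat \<Rightarrow> ((nat \<Rightarrow> int) \<Rightarrow> (nat \<Rightarrow> int)) \<Rightarrow> (nat \<Rightarrow> nat) set" where
  "Weps N \<epsilon> = {w \<in> carrier (sym_group N). \<forall>\<chi>\<in>charX N. \<epsilon> (wact w \<chi>) = \<epsilon> \<chi>}"

definition is_sylow :: "nat \<Rightarrow> nat \<Rightarrow> (nat \<Rightarrow> nat) set \<Rightarrow> (nat \<Rightarrow> nat) set \<Rightarrow> bool" where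
  "is_sylow N p S P \<longleftrightarrow> subgroup P (sym_group N) \<and> P \<subseteq> S \<and>
      card P = p ^ multiplicity p (card S)"

definition int_span :: "(nat \<Rightarrow> int) set \<Rightarrow> (nat \<Rightarrow> int) set" where
  "int_span A = {(\<lambda>i. \<Sum>a\<in>F. c a * a i) | F c. finite F \<and> F \<subseteq> A}"

definition cosets_in :: "(nat \<Rightarrow> int) set \<Rightarrow> (nat \<Rightarrow> int) set \<Rightarrow> (nat \<Rightarrow> int) set set" where
  "cosets_in U H = U // {(x, y). x \<in> U \<and> y \<in> U \<and> (\<lambda>i. x i - y i) \<in> H}"

text \<open>Rank(S, X(T); p) computed with respect to the Sylow p-subgroup P of S
  (independent of the choice of P by Sylow conjugacy):
  minimal size of a P-invariant subset of X(T) generating a subgroup of finite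
  index prime to p.\<close>
definition admissible_gen :: "nat \<Rightarrow> nat \<Rightarrow> (nat \<Rightarrow> nat) set \<Rightarrow> (nat \<Rightarrow> int) set \<Rightarrow> bool" where
  "admissible_gen N p P A \<longleftrightarrow> finite A \<and> A \<subseteq> charX N \<and>
      (\<forall>w\<in>P. \<forall>a\<in>A. wact w a \<in> A) \<and>
      finite (cosets_in (charX N) (int_span A)) \<and>
      coprime (card (cosets_in (charX N) (int_span A))) p"

definition Rank :: "nat \<Rightarrow> nat \<Rightarrow> (nat \<Rightarrow> nat) set \<Rightarrow> nat" where
  "Rank N p P = (LEAST m. \<exists>A. admissible_gen N p P A \<and> card A = m)"

end

theory Submission
  imports Defs "HOL-Algebra.Multiplicative_Group" "HOL-Library.Function_Algebras"
begin

definition addgrp :: "(nat\<Rightarrow>int) set \<Rightarrow> (nat\<Rightarrow>int) monoid" where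
  "addgrp X = \<lparr>carrier = X, mult = (+), one = 0\<rparr>"

lemma addgrp_comm_group:
  assumes "0 \<in> X" "\<And>x y. x \<in> X \<Longrightarrow> y \<in> X \<Longrightarrow> x + y \<in> X" "\<And>x. x \<in> X \<Longrightarrow> - x \<in> X"
  shows "comm_group (addgrp X)"
  apply (rule comm_groupI)
  using assms by (auto simp: addgrp_def add.assoc add.commute intro!: bexI[where x="- _"])

lemma addgrp_inv:
  assumes "0 \<in> X" "\<And>x y. x \<in> X \<Longrightarrow> y \<in> X \<Longrightarrow> x + y \<in> X" "\<And>x. x \<in> X \<Longrightarrow> - x \<in> X" "x \<in> X"
  shows "inv\<^bsub>addgrp X\<^esub> x = - x"
proof -
  interpret comm_group "addgrp X" by (rule addgrp_comm_group[OF assms(1-3)])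
  show ?thesis using assms by (intro inv_equality) (auto simp: addgrp_def)
qed

lemma addgrp_pow:
  "x [^]\<^bsub>addgrp X\<^esub> (k::nat) = (\<lambda>i. int k * x i)"
  by (induction k) (auto simp: addgrp_def fun_eq_iff algebra_simps)

lemma index_coprime_lemma:
  fixes X H :: "(nat\<Rightarrow>int) set"
  assumes X0: "0 \<in> X" and Xadd: "\<And>x y. x \<in> X \<Longrightarrow> y \<in> X \<Longrightarrow> x + y \<in> X"
    and Xneg: "\<And>x. x \<in> X \<Longrightarrow> - x \<in> X"
    and HX: "H \<subseteq> X" and H0: "0 \<in> H" and Hadd: "\<And>x y. x \<in> H \<Longrightarrow> y \<in> H \<Longrightarrow> x + y \<in> H"
    and Hneg: "\<And>x. x \<in> H \<Longrightarrow> - x \<in> H"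
    and fin: "finite (cosets_in X H)" and cop: "coprime (card (cosets_in X H)) p"
    and u: "u \<in> X" and p0: "p \<noteq> 0"
  shows "\<exists>y\<in>X. \<exists>h\<in>H. u = h + (\<lambda>i. int p * y i)"
proof -
  let ?G = "addgrp X"
  interpret G: comm_group ?G by (rule addgrp_comm_group[OF X0 Xadd Xneg])
  have sub: "subgroup H ?G"
    apply (rule G.subgroupI)
    using HX H0 Hadd Hneg addgrp_inv[OF X0 Xadd Xneg] by (auto simp: addgrp_def)
  interpret N: normal H ?G by (rule G.subgroup_imp_normal[OF sub])
  interpret F: group "?G Mod H" by (rule N.factorgroup_is_group)
  have rc: "r_coset ?G H x = {y \<in> X. x - y \<in> H}" if "x \<in> X" for x
  proof
    show "r_coset ?G H x \<subseteq> {y \<in> X. x - y \<in> H}"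
    proof
      fix y assume "y \<in> r_coset ?G H x"
      then obtain h where h: "h \<in> H" "y = h + x" unfolding r_coset_def addgrp_def by auto
      have "x - y = - h" using h(2) by simp
      then show "y \<in> {y \<in> X. x - y \<in> H}" using h HX Xadd that Hneg by auto
    qed
    show "{y \<in> X. x - y \<in> H} \<subseteq> r_coset ?G H x"
    proof
      fix y assume "y \<in> {y \<in> X. x - y \<in> H}"
      then have "- (x - y) \<in> H" using Hneg by blast
      moreover have "y = - (x - y) + x" by simp
      ultimately show "y \<in> r_coset ?G H x" unfolding r_coset_def addgrp_def by (simp only: monoid.simps) blast
    qed
  qed
  have car: "carrier (?G Mod H) = cosets_in X H"
  proof -
    have "{(x, y). x \<in> X \<and> y \<in> X \<and> (\<lambda>i. x i - y i) \<in> H} `` {x} = r_coset ?G H x"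
      if "x \<in> X" for x
    proof -
      have dl: "(\<lambda>i. a i - b i) = a - b" for a b :: "nat \<Rightarrow> int" by (rule ext) simp
      show ?thesis unfolding dl rc[OF that] Image_def using that by blast
    qed
    then show ?thesis
      unfolding carrier_FactGroup cosets_in_def quotient_def by (auto simp: addgrp_def)
  qed
  have uc: "u \<in> carrier ?G" using u by (simp add: addgrp_def)
  have hom: "(\<lambda>a. H #>\<^bsub>?G\<^esub> a) \<in> hom ?G (?G Mod H)" by (rule N.r_coset_hom_Mod)
  have uF: "H #>\<^bsub>?G\<^esub> u \<in> carrier (?G Mod H)"
    using hom uc by (auto simp: hom_def)
  have powh: "(H #>\<^bsub>?G\<^esub> u) [^]\<^bsub>?G Mod H\<^esub> k = H #>\<^bsub>?G\<^esub> (\<lambda>i. int k * u i)" for k :: nat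
    using hom_nat_pow[OF hom uc G.is_group F.is_group] by (simp add: addgrp_pow)
  obtain a b where ab: "p * a = card (cosets_in X H) * b + gcd p (card (cosets_in X H))"
    using bezout_nat[of p "card (cosets_in X H)"] p0 by auto
  have "gcd p (card (cosets_in X H)) = 1" using cop by (simp add: coprime_commute)
  with ab have ab': "p * a = card (cosets_in X H) * b + 1" by simp
  have ordm: "(H #>\<^bsub>?G\<^esub> u) [^]\<^bsub>?G Mod H\<^esub> card (cosets_in X H) = \<one>\<^bsub>?G Mod H\<^esub>"
    using F.pow_order_eq_1[OF uF] by (simp add: order_def car)
  have "(H #>\<^bsub>?G\<^esub> u) [^]\<^bsub>?G Mod H\<^esub> (p * a) = H #>\<^bsub>?G\<^esub> u"
  proof -
    let ?g = "H #>\<^bsub>?G\<^esub> u" and ?m = "card (cosets_in X H)"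
    have "?g [^]\<^bsub>?G Mod H\<^esub> (?m * b + 1) = ?g [^]\<^bsub>?G Mod H\<^esub> (?m * b) \<otimes>\<^bsub>?G Mod H\<^esub> ?g"
      using uF by (simp add: F.nat_pow_mult[symmetric])
    also have "?g [^]\<^bsub>?G Mod H\<^esub> (?m * b) = \<one>\<^bsub>?G Mod H\<^esub>"
      using uF ordm F.nat_pow_one[of b] by (simp add: F.nat_pow_pow[symmetric])
    finally show ?thesis unfolding ab' using uF F.l_one[OF uF] by simp
  qed
  then have eq: "H #>\<^bsub>?G\<^esub> (\<lambda>i. int (p * a) * u i) = H #>\<^bsub>?G\<^esub> u" by (simp add: powh)
  define y where "y = (\<lambda>i. int a * u i)"
  have yX: "y \<in> X" unfolding y_def using addgrp_pow[where x=u and X=X and k=a] G.nat_pow_closed[OF uc, of a]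
    by (simp add: addgrp_def)
  have "u \<in> H #>\<^bsub>?G\<^esub> (\<lambda>i. int (p * a) * u i)" using eq G.rcos_self[OF uc sub] by simp
  then obtain h where h: "h \<in> H" "u = h + (\<lambda>i. int (p * a) * u i)"
    unfolding r_coset_def addgrp_def by auto
  have "u = h + (\<lambda>i. int p * y i)" using h(2) by (simp add: y_def mult.assoc)
  then show ?thesis using yX h(1) by blast
qed


lemma Fp_vec_mod: "v \<in> Fp_vec p n \<Longrightarrow> v k mod int p = v k"
  unfolding Fp_vec_def by (cases "k \<in> {1..n}") auto

lemma Fp_vec_eqI: "u \<in> Fp_vec p n \<Longrightarrow> v \<in> Fp_vec p n \<Longrightarrow> (\<And>k. u k mod int p = v k mod int p) \<Longrightarrow> u = v"
  using Fp_vec_mod by (metis ext)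

lemma Fp_vec_outside: "v \<in> Fp_vec p n \<Longrightarrow> k \<notin> {1..n} \<Longrightarrow> v k = 0"
  unfolding Fp_vec_def by auto

lemma Fp_vec_memI: "p > 0 \<Longrightarrow> (\<And>k. k \<notin> {1..n} \<Longrightarrow> v k = 0) \<Longrightarrow> (\<And>k. v k = w k mod int p) \<Longrightarrow> v \<in> Fp_vec p n"
  unfolding Fp_vec_def by auto

lemma card_Fp_vec: assumes "p > 0" shows "finite (Fp_vec p n) \<and> card (Fp_vec p n) = p ^ n"
proof -
  have b: "bij_betw (\<lambda>v. restrict v {1..n}) (Fp_vec p n) (PiE {1..n} (\<lambda>_. {0..<int p}))"
  proof (rule bij_betw_byWitness[where f'="\<lambda>f i. if i \<in> {1..n} then f i else 0"])
    show "\<forall>a\<in>Fp_vec p n. (\<lambda>i. if i \<in> {1..n} then restrict a {1..n} i else 0) = a"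
      unfolding Fp_vec_def by (auto simp: fun_eq_iff)
    show "\<forall>a'\<in>PiE {1..n} (\<lambda>_. {0..<int p}). restrict (\<lambda>i. if i \<in> {1..n} then a' i else 0) {1..n} = a'"
      by (auto simp: PiE_def extensional_def fun_eq_iff)
    show "(\<lambda>v. restrict v {1..n}) ` Fp_vec p n \<subseteq> PiE {1..n} (\<lambda>_. {0..<int p})"
      unfolding Fp_vec_def by auto
    show "(\<lambda>f i. if i \<in> {1..n} then f i else 0) ` PiE {1..n} (\<lambda>_. {0..<int p}) \<subseteq> Fp_vec p n"
      unfolding Fp_vec_def by (auto simp: PiE_def Pi_def)
  qed
  have f: "finite (PiE {1..n} (\<lambda>_. {0..<int p}))" by (simp add: finite_PiE)
  have c: "card (PiE {1..n} (\<lambda>_. {0..<int p})) = p ^ n" by (simp add: card_PiE)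
  show ?thesis using b f c bij_betw_finite bij_betw_same_card by metis
qed

locale pglsetup =
  fixes p n :: nat and V :: "nat \<Rightarrow> nat \<Rightarrow> int" and j0 :: nat
  assumes pp: "prime p" and n1: "n \<ge> 1"
    and Vb: "bij_betw V {1..p^n} (Fp_vec p n)"
    and j0: "j0 \<in> {1..p^n}" and Vj0: "V j0 = (\<lambda>_. 0)"
begin

abbreviation "N \<equiv> p ^ n"
abbreviation "I \<equiv> {1..p ^ n}"
abbreviation "Vs \<equiv> Fp_vec p n"

definition eps :: "(nat \<Rightarrow> int) \<Rightarrow> (nat \<Rightarrow> int)" where
  "eps \<chi> = (\<lambda>k. (\<Sum>i\<in>I. \<chi> i * V i k) mod int p)"

definition tr :: "(nat \<Rightarrow> int) \<Rightarrow> nat \<Rightarrow> nat" where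
  "tr t i = (if i \<in> I then inv_into I V (Fp_add p (V i) t) else i)"

lemma p1: "p > 1" using pp prime_gt_1_nat by auto
lemma p0: "p > 0" using p1 by simp

lemma N0: "N > 0" using p0 by simp

lemma VI: "i \<in> I \<Longrightarrow> V i \<in> Vs" by (rule bij_betw_apply[OF Vb])

lemma Vinj: "i \<in> I \<Longrightarrow> j \<in> I \<Longrightarrow> V i = V j \<Longrightarrow> i = j"
  using Vb by (auto simp: bij_betw_def inj_on_def)

lemma Vsurj: "v \<in> Vs \<Longrightarrow> \<exists>i\<in>I. V i = v"
  using Vb by (metis bij_betw_def imageE)

lemma Vout: "k \<notin> {1..n} \<Longrightarrow> i \<in> I \<Longrightarrow> V i k = 0"
  using VI Fp_vec_outside by blast

lemma eps_in: "eps \<chi> \<in> Vs"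
  by (rule Fp_vec_memI[OF p0, where w="\<lambda>k. \<Sum>i\<in>I. \<chi> i * V i k"]) (auto simp: eps_def Vout)

lemma eps_add: "eps (\<lambda>i. \<chi> i + \<psi> i) = Fp_add p (eps \<chi>) (eps \<psi>)"
  unfolding eps_def Fp_add_def
  by (auto simp: fun_eq_iff distrib_right sum.distrib mod_add_eq)

lemma Fp_add0: "v \<in> Vs \<Longrightarrow> Fp_add p (\<lambda>_. 0) v = v"
  unfolding Fp_add_def using Fp_vec_mod by auto

lemma Fp_add_in: "u \<in> Vs \<Longrightarrow> v \<in> Vs \<Longrightarrow> Fp_add p u v \<in> Vs"
  unfolding Fp_add_def
  by (rule Fp_vec_memI[OF p0, where w="\<lambda>k. u k + v k"]) (auto simp: Fp_vec_outside)

definition ee :: "nat \<Rightarrow> nat \<Rightarrow> nat \<Rightarrow> int" where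
  "ee i j = (\<lambda>k. (if k = i then 1 else 0) - (if k = j then 1 else 0))"

lemma ee_charX: "i \<in> I \<Longrightarrow> j \<in> I \<Longrightarrow> ee i j \<in> charX N"
  unfolding charX_def ee_def by (simp add: sum_subtractf)

lemma eps_ee: assumes "i \<in> I" "j \<in> I" shows "eps (ee i j) = (\<lambda>k. (V i k - V j k) mod int p)"
proof -
  have "(\<Sum>k\<in>I. ee i j k * V k x) = V i x - V j x" if "i \<in> I" "j \<in> I" for x
  proof -
    have "(\<Sum>k\<in>I. ee i j k * V k x) = (\<Sum>k\<in>I. (if k = i then V k x else 0) - (if k = j then V k x else 0))"
      by (rule sum.cong) (auto simp: ee_def)
    also have "\<dots> = V i x - V j x" using that by (simp add: sum_subtractf)
    finally show ?thesis .
  qed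
  then show ?thesis using assms unfolding eps_def by auto
qed

end

lemma sum_mod_inner:
  fixes m :: int
  shows "(\<Sum>i\<in>A. c i * (f i mod m)) mod m = (\<Sum>i\<in>A. c i * f i) mod m"
proof -
  have "(\<Sum>i\<in>A. c i * (f i mod m)) mod m = (\<Sum>i\<in>A. (c i * (f i mod m)) mod m) mod m"
    by (simp add: mod_sum_eq)
  also have "\<dots> = (\<Sum>i\<in>A. (c i * f i) mod m) mod m"
    by (simp add: mod_mult_right_eq)
  also have "\<dots> = (\<Sum>i\<in>A. c i * f i) mod m" by (simp add: mod_sum_eq)
  finally show ?thesis .
qed

lemma mod_add_rcancel_int: "(a + t) mod (m::int) = (b + t) mod m \<Longrightarrow> a mod m = b mod m"
  by (simp add: mod_eq_dvd_iff)

context pglsetup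
begin

lemma ee_sum: assumes "i \<in> I" "j \<in> I" shows "(\<Sum>k\<in>I. ee i j k * f k) = f i - f j"
proof -
  have "(\<Sum>k\<in>I. ee i j k * f k) = (\<Sum>k\<in>I. (if k = i then f k else 0) - (if k = j then f k else 0))"
    by (rule sum.cong) (auto simp: ee_def)
  also have "\<dots> = f i - f j" using assms by (simp add: sum_subtractf)
  finally show ?thesis .
qed

lemma eps_surj: "Vs \<subseteq> eps ` charX N"
proof
  fix v assume v: "v \<in> Vs"
  then obtain j where j: "j \<in> I" "V j = v" using Vsurj by blast
  have "eps (ee j j0) = v"
    using eps_ee[OF j(1) j0] Vj0 Fp_vec_mod[OF v] j(2) by auto
  then show "v \<in> eps ` charX N" using ee_charX[OF j(1) j0] by (metis image_eqI)
qed

lemma roots_ee: "roots N = {ee i j | i j. i \<in> I \<and> j \<in> I \<and> i \<noteq> j}"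
  unfolding roots_def ee_def by simp

lemma eps_roots: "\<alpha> \<in> roots N \<Longrightarrow> eps \<alpha> \<noteq> (\<lambda>_. 0)"
proof
  assume "\<alpha> \<in> roots N" "eps \<alpha> = (\<lambda>_. 0)"
  then obtain i j where ij: "i \<in> I" "j \<in> I" "i \<noteq> j" "\<alpha> = ee i j" and e: "eps \<alpha> = (\<lambda>_. 0)"
    unfolding roots_ee by blast
  have "(V i k - V j k) mod int p = 0" for k using e eps_ee[OF ij(1,2)] ij(4) by (metis)
  then have "V i k mod int p = V j k mod int p" for k by (simp add: mod_eq_dvd_iff mod_eq_0_iff_dvd)
  then have "V i = V j" using Fp_vec_eqI VI ij by metis
  then show False using Vinj ij by blast
qed

lemma wact_apply: "wact w \<chi> i = \<chi> (inv' w i)" unfolding wact_def by simp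

lemma wact_charX:
  assumes w: "w permutes I" and c: "\<chi> \<in> charX N"
  shows "wact w \<chi> \<in> charX N"
proof -
  have iw: "inv' w permutes I" using permutes_inv[OF w] .
  have out: "wact w \<chi> i = 0" if "i \<notin> I" for i
    using c that permutes_not_in[OF iw that] unfolding wact_apply charX_def by auto
  have b: "bij_betw w I I" using permutes_imp_bij[OF w] .
  have "(\<Sum>i\<in>I. wact w \<chi> i) = (\<Sum>x\<in>I. wact w \<chi> (w x))"
    using sum.reindex_bij_betw[OF b, of "wact w \<chi>"] by simp
  also have "\<dots> = (\<Sum>x\<in>I. \<chi> x)" by (simp add: wact_apply permutes_inverses(2)[OF w])
  also have "\<dots> = 0" using c unfolding charX_def by simp
  finally show ?thesis using out unfolding charX_def by auto
qed

lemma eps_wact: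
  assumes w: "w permutes I"
  shows "eps (wact w \<chi>) = (\<lambda>k. (\<Sum>i\<in>I. \<chi> i * V (w i) k) mod int p)"
proof -
  have b: "bij_betw w I I" using permutes_imp_bij[OF w] .
  have "(\<Sum>i\<in>I. wact w \<chi> i * V i k) = (\<Sum>i\<in>I. \<chi> i * V (w i) k)" for k
  proof -
    have "(\<Sum>i\<in>I. wact w \<chi> i * V i k) = (\<Sum>x\<in>I. wact w \<chi> (w x) * V (w x) k)"
      using sum.reindex_bij_betw[OF b, of "\<lambda>i. wact w \<chi> i * V i k"] by simp
    also have "\<dots> = (\<Sum>x\<in>I. \<chi> x * V (w x) k)" by (simp add: wact_apply permutes_inverses(2)[OF w])
    finally show ?thesis .
  qed
  then show ?thesis unfolding eps_def by simp
qed

lemma Weps_char: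
  assumes w: "w \<in> Weps N eps"
  shows "w permutes I" "\<And>i. i \<in> I \<Longrightarrow> V (w i) = Fp_add p (V i) (V (w j0))"
proof -
  show wp: "w permutes I" using w unfolding Weps_def sym_group_carrier by simp
  fix i assume i: "i \<in> I"
  have "eps (wact w (ee i j0)) = eps (ee i j0)" using w ee_charX[OF i j0] unfolding Weps_def by blast
  then have e: "(\<Sum>x\<in>I. ee i j0 x * V (w x) k) mod int p = (V i k - V j0 k) mod int p" for k
    unfolding eps_wact[OF wp] eps_ee[OF i j0] by (metis)
  have "(V (w i) k - V (w j0) k) mod int p = V i k" for k
    using e[of k] ee_sum[OF i j0, of "\<lambda>x. V (w x) k"] Vj0 Fp_vec_mod[OF VI[OF i]] by simp
  then have "V (w i) k = (V i k + V (w j0) k) mod int p" for k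
    using Fp_vec_mod[OF VI[OF permutes_in_image[OF wp, THEN iffD2, OF i]]]
    by (metis diff_add_cancel mod_add_left_eq)
  then show "V (w i) = Fp_add p (V i) (V (w j0))" unfolding Fp_add_def by auto
qed

lemma tr_V:
  assumes t: "t \<in> Vs" and i: "i \<in> I"
  shows "tr t i \<in> I" "V (tr t i) = Fp_add p (V i) t"
proof -
  have u: "Fp_add p (V i) t \<in> V ` I" using Fp_add_in[OF VI[OF i] t] Vb unfolding bij_betw_def by simp
  show "tr t i \<in> I" unfolding tr_def using i inv_into_into[OF u] by simp
  show "V (tr t i) = Fp_add p (V i) t" unfolding tr_def using i f_inv_into_f[OF u] by simp
qed

lemma tr_out: "i \<notin> I \<Longrightarrow> tr t i = i"
  unfolding tr_def by (simp only: if_False)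

lemma tr_perm:
  assumes t: "t \<in> Vs"
  shows "tr t permutes I"
proof -
  have inj: "inj_on (tr t) I"
  proof (rule inj_onI)
    fix i i' assume ii: "i \<in> I" "i' \<in> I" "tr t i = tr t i'"
    then have "Fp_add p (V i) t = Fp_add p (V i') t" using tr_V[OF t] by metis
    then have "(V i k + t k) mod int p = (V i' k + t k) mod int p" for k
      unfolding Fp_add_def by metis
    then have "V i k mod int p = V i' k mod int p" for k
      by (rule mod_add_rcancel_int)
    then have "V i = V i'" using Fp_vec_eqI VI ii by metis
    then show "i = i'" using Vinj ii by blast
  qed
  have sub: "tr t ` I \<subseteq> I" using tr_V(1)[OF t] by auto
  have "tr t ` I = I" using endo_inj_surj[OF _ sub inj] by simp
  then have "bij_betw (tr t) I I" using inj by (simp add: bij_betw_def)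
  moreover have "tr t x = x" if "x \<notin> I" for x using that unfolding tr_def by (simp only: if_False)
  ultimately show ?thesis by (rule bij_imp_permutes)
qed

lemma tr_Weps:
  assumes t: "t \<in> Vs"
  shows "tr t \<in> Weps N eps"
proof -
  have tp: "tr t permutes I" by (rule tr_perm[OF t])
  have "eps (wact (tr t) \<chi>) = eps \<chi>" if c: "\<chi> \<in> charX N" for \<chi>
  proof
    fix k
    have "eps (wact (tr t) \<chi>) k = (\<Sum>i\<in>I. \<chi> i * V (tr t i) k) mod int p"
      unfolding eps_wact[OF tp] by simp
    also have "\<dots> = (\<Sum>i\<in>I. \<chi> i * ((V i k + t k) mod int p)) mod int p"
      using tr_V(2)[OF t] by (simp add: Fp_add_def)
    also have "\<dots> = (\<Sum>i\<in>I. \<chi> i * (V i k + t k)) mod int p"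
      by (rule sum_mod_inner)
    also have "\<dots> = ((\<Sum>i\<in>I. \<chi> i * V i k) + (\<Sum>i\<in>I. \<chi> i) * t k) mod int p"
      by (simp add: distrib_left sum.distrib sum_distrib_right)
    also have "\<dots> = eps \<chi> k" using c unfolding charX_def eps_def by simp
    finally show "eps (wact (tr t) \<chi>) k = eps \<chi> k" .
  qed
  then show ?thesis unfolding Weps_def sym_group_carrier using tp by simp
qed

lemma Weps_tr:
  assumes w: "w \<in> Weps N eps"
  shows "w = tr (V (w j0))"
proof -
  have wp: "w permutes I" using Weps_char(1)[OF w] .
  have wj: "w j0 \<in> I" using permutes_in_image[OF wp] j0 by simp
  have t: "V (w j0) \<in> Vs" using VI[OF wj] .
  show ?thesis
  proof
    fix i show "w i = tr (V (w j0)) i"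
    proof (cases "i \<in> I")
      case True
      have "V (w i) = V (tr (V (w j0)) i)" using Weps_char(2)[OF w True] tr_V(2)[OF t True] by simp
      then show ?thesis using Vinj permutes_in_image[OF wp] True tr_V(1)[OF t True] by metis
    next
      case False
      then show ?thesis using permutes_not_in[OF wp False] tr_out[OF False] by simp
    qed
  qed
qed

lemma Weps_eq: "Weps N eps = tr ` Vs"
proof
  show "Weps N eps \<subseteq> tr ` Vs"
  proof
    fix w assume w: "w \<in> Weps N eps"
    have wj: "w j0 \<in> I" using permutes_in_image[OF Weps_char(1)[OF w]] j0 by simp
    show "w \<in> tr ` Vs" using Weps_tr[OF w] VI[OF wj] by (metis image_eqI)
  qed
  show "tr ` Vs \<subseteq> Weps N eps" using tr_Weps by auto
qed

lemma tr_j0: "t \<in> Vs \<Longrightarrow> V (tr t j0) = t"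
  using tr_V(2)[OF _ j0] Vj0 Fp_add0 by simp

lemma card_Weps: "card (Weps N eps) = N"
proof -
  have "inj_on tr Vs" by (rule inj_onI) (metis tr_j0)
  then have "card (tr ` Vs) = card Vs" by (rule card_image)
  then show ?thesis using Weps_eq card_Fp_vec[OF p0] by simp
qed

lemma finite_Weps: "finite (Weps N eps)"
  using Weps_eq card_Fp_vec[OF p0] by simp

end

lemma charX_0: "(\<lambda>_. 0) \<in> charX N" unfolding charX_def by simp
lemma charX_add: "x \<in> charX N \<Longrightarrow> y \<in> charX N \<Longrightarrow> x + y \<in> charX N"
  unfolding charX_def by (simp add: sum.distrib)
lemma charX_neg: "x \<in> charX N \<Longrightarrow> - x \<in> charX N"
  unfolding charX_def by (simp add: sum_negf)
lemma charX_diff: "x \<in> charX N \<Longrightarrow> y \<in> charX N \<Longrightarrow> (\<lambda>i. x i - y i) \<in> charX N"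
  unfolding charX_def by (simp add: sum_subtractf)

context pglsetup
begin

lemma wact_comp:
  assumes a: "a permutes I" and b: "b permutes I"
  shows "wact (a \<circ> b) \<chi> = wact a (wact b \<chi>)"
  unfolding wact_def using o_inv_distrib[OF permutes_bij[OF a] permutes_bij[OF b]]
  by (simp add: comp_assoc)

lemma wact_inv:
  assumes a: "a permutes I"
  shows "wact a (wact (inv' a) \<chi>) = \<chi>"
  unfolding wact_def using permutes_inv_inv[OF a] permutes_inv_o(1)[OF a]
  by (simp add: comp_assoc)

lemma Weps_subgroup: "subgroup (Weps N eps) (sym_group N)"
proof (rule group.subgroupI[OF sym_group_is_group])
  show "Weps N eps \<subseteq> carrier (sym_group N)" unfolding Weps_def by auto
  have "(\<lambda>_. 0) \<in> Vs" using VI[OF j0] Vj0 by simp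
  then show "Weps N eps \<noteq> {}" using tr_Weps by blast
next
  fix a assume a: "a \<in> Weps N eps"
  have ap: "a permutes I" using Weps_char(1)[OF a] .
  have ac: "a \<in> carrier (sym_group N)" using ap by (simp add: sym_group_carrier)
  have ip: "inv' a permutes I" using permutes_inv[OF ap] .
  have "eps (wact (inv' a) \<chi>) = eps \<chi>" if c: "\<chi> \<in> charX N" for \<chi>
  proof -
    have "wact (inv' a) \<chi> \<in> charX N" using wact_charX[OF ip c] .
    then have "eps (wact a (wact (inv' a) \<chi>)) = eps (wact (inv' a) \<chi>)" using a unfolding Weps_def by blast
    then show ?thesis using wact_inv[OF ap] by simp
  qed
  then show "inv\<^bsub>sym_group N\<^esub> a \<in> Weps N eps"
    unfolding sym_group_inv_equality[OF ac] Weps_def sym_group_carrier using ip by simp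
next
  fix a b assume a: "a \<in> Weps N eps" and b: "b \<in> Weps N eps"
  have ap: "a permutes I" using Weps_char(1)[OF a] .
  have bp: "b permutes I" using Weps_char(1)[OF b] .
  have "eps (wact (a \<circ> b) \<chi>) = eps \<chi>" if c: "\<chi> \<in> charX N" for \<chi>
  proof -
    have "wact b \<chi> \<in> charX N" using wact_charX[OF bp c] .
    then have "eps (wact a (wact b \<chi>)) = eps (wact b \<chi>)" using a unfolding Weps_def by blast
    also have "\<dots> = eps \<chi>" using b c unfolding Weps_def by blast
    finally show ?thesis using wact_comp[OF ap bp] by simp
  qed
  then show "a \<otimes>\<^bsub>sym_group N\<^esub> b \<in> Weps N eps"
    unfolding sym_group_mult Weps_def sym_group_carrier using permutes_compose[OF bp ap] by simp
qed

lemma Weps_sylow: "is_sylow N p (Weps N eps) (Weps N eps)"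
  unfolding is_sylow_def using Weps_subgroup card_Weps pp
  by (simp add: multiplicity_prime_power prime_imp_prime_elem)

lemma tr_hits: assumes j: "j \<in> I" shows "tr (V j) j0 = j"
  using tr_j0[OF VI[OF j]] tr_V(1)[OF VI[OF j] j0] Vinj j by metis

lemma Weps_fixed: "{\<chi> \<in> charX N. \<forall>w\<in>Weps N eps. wact w \<chi> = \<chi>} = {\<lambda>_. 0}"
proof
  show "{\<lambda>_. 0} \<subseteq> {\<chi> \<in> charX N. \<forall>w\<in>Weps N eps. wact w \<chi> = \<chi>}"
    using charX_0 by (auto simp: wact_def)
  show "{\<chi> \<in> charX N. \<forall>w\<in>Weps N eps. wact w \<chi> = \<chi>} \<subseteq> {\<lambda>_. 0}"
  proof
    fix \<chi> assume "\<chi> \<in> {\<chi> \<in> charX N. \<forall>w\<in>Weps N eps. wact w \<chi> = \<chi>}"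
    then have c: "\<chi> \<in> charX N" and f: "\<And>w. w \<in> Weps N eps \<Longrightarrow> wact w \<chi> = \<chi>" by auto
    have eq: "\<chi> j = \<chi> j0" if j: "j \<in> I" for j
    proof -
      let ?w = "tr (V j)"
      have wp: "?w permutes I" using tr_perm[OF VI[OF j]] .
      have "wact ?w \<chi> j = \<chi> j" using f[OF tr_Weps[OF VI[OF j]]] by simp
      moreover have "inv' ?w j = j0" using permutes_inverses(2)[OF wp, of j0] tr_hits[OF j] by simp
      ultimately show ?thesis by (simp add: wact_apply)
    qed
    have "0 = (\<Sum>j\<in>I. \<chi> j)" using c unfolding charX_def by simp
    also have "\<dots> = (\<Sum>j\<in>I. \<chi> j0)" using eq by simp
    also have "\<dots> = int N * \<chi> j0" by simp
    finally have "\<chi> j0 = 0" using p0 by simp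
    then have "\<chi> = (\<lambda>_. 0)"
    proof -
      assume z: "\<chi> j0 = 0"
      show ?thesis
      proof
        fix k show "\<chi> k = 0"
        proof (cases "k \<in> I")
          case True then show ?thesis using eq z by simp
        next
          case False then show ?thesis using c unfolding charX_def by blast
        qed
      qed
    qed
    then show "\<chi> \<in> {\<lambda>_. 0}" by simp
  qed
qed

lemma wact_ee:
  assumes w: "w permutes I"
  shows "wact w (ee i j) = ee (w i) (w j)"
  unfolding wact_def ee_def
  by (auto simp: fun_eq_iff permutes_inverses[OF w] dest: permutes_inj[OF w, THEN injD]
      intro!: arg_cong2[where f="(-)"])

lemma charX_span: "charX N \<subseteq> int_span (roots N)"
proof
  fix \<chi> assume c: "\<chi> \<in> charX N"
  let ?S = "I - {j0}"
  let ?r = "\<lambda>i. ee i j0"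
  have inj: "inj_on ?r ?S"
  proof (rule inj_onI)
    fix i i' assume ii: "i \<in> ?S" "i' \<in> ?S" "ee i j0 = ee i' j0"
    then have "ee i j0 i = ee i' j0 i" by simp
    then show "i = i'" using ii unfolding ee_def by (auto split: if_splits)
  qed
  define c where "c = (\<lambda>a. \<chi> (inv_into ?S ?r a))"
  have Fr: "?r ` ?S \<subseteq> roots N"
  proof
    fix a assume "a \<in> ?r ` ?S"
    then obtain i where "i \<in> ?S" "a = ee i j0" by blast
    then show "a \<in> roots N" unfolding roots_ee using j0 by blast
  qed
  have sS: "(\<Sum>i\<in>?S. \<chi> i) = - \<chi> j0"
    using c j0 unfolding charX_def by (simp add: sum_diff1)
  have "(\<lambda>k. \<Sum>a\<in>?r ` ?S. c a * a k) = \<chi>"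
  proof
    fix k
    have "(\<Sum>a\<in>?r ` ?S. c a * a k) = (\<Sum>i\<in>?S. c (?r i) * ?r i k)"
      using sum.reindex[OF inj, of "\<lambda>a. c a * a k"] by simp
    also have "\<dots> = (\<Sum>i\<in>?S. \<chi> i * ee i j0 k)"
      unfolding c_def using inv_into_f_f[OF inj] by simp
    also have "\<dots> = (\<Sum>i\<in>?S. (if i = k then \<chi> i else 0) - (if k = j0 then \<chi> i else 0))"
      by (rule sum.cong) (auto simp: ee_def)
    also have "\<dots> = (if k \<in> ?S then \<chi> k else 0) - (if k = j0 then (\<Sum>i\<in>?S. \<chi> i) else 0)"
      by (simp add: sum_subtractf)
    also have "\<dots> = \<chi> k" using sS c unfolding charX_def by auto
    finally show "(\<Sum>a\<in>?r ` ?S. c a * a k) = \<chi> k" .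
  qed
  then show "\<chi> \<in> int_span (roots N)" unfolding int_span_def using Fr by blast
qed

lemma roots_finite: "finite (roots N)"
proof -
  have "roots N \<subseteq> (\<lambda>(i,j). ee i j) ` (I \<times> I)" unfolding roots_ee by auto
  then show ?thesis by (rule finite_subset) simp
qed

lemma roots_adm: "admissible_gen N p (Weps N eps) (roots N)"
proof -
  have sub: "roots N \<subseteq> charX N" unfolding roots_ee using ee_charX by auto
  have inv: "\<forall>w\<in>Weps N eps. \<forall>a\<in>roots N. wact w a \<in> roots N"
  proof (intro ballI)
    fix w a assume w: "w \<in> Weps N eps" and a: "a \<in> roots N"
    have wp: "w permutes I" using Weps_char(1)[OF w] .
    obtain i j where ij: "i \<in> I" "j \<in> I" "i \<noteq> j" "a = ee i j" using a unfolding roots_ee by blast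
    have "w i \<in> I" "w j \<in> I" using ij permutes_in_image[OF wp] by auto
    moreover have "w i \<noteq> w j" using ij(3) permutes_inj[OF wp] by (auto dest: injD)
    moreover have "wact w a = ee (w i) (w j)" using ij(4) wact_ee[OF wp] by simp
    ultimately show "wact w a \<in> roots N" unfolding roots_ee by blast
  qed
  have rel: "{(x, y). x \<in> charX N \<and> y \<in> charX N \<and> (\<lambda>i. x i - y i) \<in> int_span (roots N)} = charX N \<times> charX N"
    using charX_diff charX_span by auto
  have "cosets_in (charX N) (int_span (roots N)) = {charX N}"
    unfolding cosets_in_def rel quotient_def using charX_0 by auto
  then show ?thesis unfolding admissible_gen_def using sub inv roots_finite by simp
qed

end

lemma sum_mod_const_perm:
  fixes p :: nat and \<sigma> x :: int
  assumes pp: "prime p" and nd: "\<not> int p dvd \<sigma>"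
  shows "(\<Sum>m\<in>{0..<p}. (x + int m * \<sigma>) mod int p) = (\<Sum>r\<in>{0..<int p}. r)"
proof -
  let ?h = "\<lambda>m. (x + int m * \<sigma>) mod int p"
  have p0: "p > 0" using pp prime_gt_0_nat by blast
  have pi: "prime (int p)" using pp by simp
  have inj: "inj_on ?h {0..<p}"
  proof (rule inj_onI)
    fix m m' assume mm: "m \<in> {0..<p}" "m' \<in> {0..<p}" "?h m = ?h m'"
    then have "int p dvd (x + int m * \<sigma>) - (x + int m' * \<sigma>)" by (simp add: mod_eq_dvd_iff)
    then have "int p dvd (int m - int m') * \<sigma>" by (simp add: algebra_simps)
    then have dv: "int p dvd (int m - int m')" using pi nd prime_dvd_mult_iff by blast
    have lt: "\<bar>int m - int m'\<bar> < int p" using mm by auto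
    show "m = m'"
    proof (rule ccontr)
      assume "m \<noteq> m'"
      then have "int m - int m' \<noteq> 0" by simp
      from dvd_imp_le_int[OF this dv] lt show False by simp
    qed
  qed
  have sub: "?h ` {0..<p} \<subseteq> {0..<int p}" using p0 by auto
  have "card (?h ` {0..<p}) = card {0..<int p}" using card_image[OF inj] by simp
  then have "?h ` {0..<p} = {0..<int p}" using card_subset_eq[OF _ sub] by simp
  then have "bij_betw ?h {0..<p} {0..<int p}" using inj by (simp add: bij_betw_def)
  from sum.reindex_bij_betw[OF this, of "\<lambda>r. r"] show ?thesis by simp
qed

context pglsetup
begin

lemma Fp_range: "v \<in> Vs \<Longrightarrow> 0 \<le> v k \<and> v k < int p"
  using p0 unfolding Fp_vec_def by (cases "k \<in> {1..n}") auto

lemma key1: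
  fixes L :: "nat \<Rightarrow> int" and \<sigma> :: int
  assumes g: "g permutes I" and nd: "\<not> int p dvd \<sigma>"
    and Lg: "\<And>i. i \<in> I \<Longrightarrow> L (g i) mod int p = (L i + \<sigma>) mod int p"
    and a: "a \<in> charX N" and ag: "\<And>i. i \<in> I \<Longrightarrow> a (g i) = a i"
  shows "(\<Sum>i\<in>I. a i * (L i mod int p)) = 0"
proof -
  let ?f = "\<lambda>i. L i mod int p"
  let ?S = "\<Sum>i\<in>I. a i * ?f i"
  have gm: "(g ^^ m) permutes I" for m using permutes_funpow[OF g] .
  have fm: "?f ((g ^^ m) i) = (L i + int m * \<sigma>) mod int p" if i: "i \<in> I" for m i
  proof (induction m)
    case 0 then show ?case by simp
  next
    case (Suc m)
    have gi: "(g ^^ m) i \<in> I" using permutes_in_image[OF gm] i by simp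
    have "?f ((g ^^ Suc m) i) = (L ((g ^^ m) i) + \<sigma>) mod int p" using Lg[OF gi] by simp
    also have "\<dots> = (?f ((g ^^ m) i) + \<sigma>) mod int p" by (simp add: mod_add_left_eq)
    also have "\<dots> = ((L i + int m * \<sigma>) mod int p + \<sigma>) mod int p" using Suc by simp
    also have "\<dots> = (L i + int m * \<sigma> + \<sigma>) mod int p" by (simp add: mod_add_left_eq)
    also have "\<dots> = (L i + int (Suc m) * \<sigma>) mod int p" by (simp add: algebra_simps)
    finally show ?case .
  qed
  have am: "a ((g ^^ m) i) = a i" if i: "i \<in> I" for m i
  proof (induction m)
    case 0 then show ?case by simp
  next
    case (Suc m)
    have gi: "(g ^^ m) i \<in> I" using permutes_in_image[OF gm] i by simp
    then show ?case using ag[OF gi] Suc by simp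
  qed
  have Sm: "(\<Sum>i\<in>I. a i * ?f ((g ^^ m) i)) = ?S" for m
  proof -
    have b: "bij_betw (g ^^ m) I I" using permutes_imp_bij[OF gm[of m]] .
    have "(\<Sum>i\<in>I. a i * ?f ((g ^^ m) i)) = (\<Sum>i\<in>I. a ((g ^^ m) i) * ?f ((g ^^ m) i))"
      using am by simp
    also have "\<dots> = ?S" using sum.reindex_bij_betw[OF b, of "\<lambda>i. a i * ?f i"] by simp
    finally show ?thesis .
  qed
  let ?C = "\<Sum>r\<in>{0..<int p}. r"
  have "int p * ?S = (\<Sum>m\<in>{0..<p}. ?S)" by simp
  also have "\<dots> = (\<Sum>m\<in>{0..<p}. \<Sum>i\<in>I. a i * ?f ((g ^^ m) i))" using Sm by simp
  also have "\<dots> = (\<Sum>i\<in>I. a i * (\<Sum>m\<in>{0..<p}. ?f ((g ^^ m) i)))"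
    by (simp add: sum.swap[of _ "{0..<p}"] sum_distrib_left)
  also have "\<dots> = (\<Sum>i\<in>I. a i * ?C)"
  proof (rule sum.cong[OF refl])
    fix i assume i: "i \<in> I"
    have "(\<Sum>m\<in>{0..<p}. ?f ((g ^^ m) i)) = (\<Sum>m\<in>{0..<p}. (L i + int m * \<sigma>) mod int p)"
      using fm[OF i] by simp
    also have "\<dots> = ?C" by (rule sum_mod_const_perm[OF pp nd])
    finally show "a i * (\<Sum>m\<in>{0..<p}. ?f ((g ^^ m) i)) = a i * ?C" by simp
  qed
  also have "\<dots> = (\<Sum>i\<in>I. a i) * ?C" by (simp add: sum_distrib_right)
  also have "\<dots> = 0" using a unfolding charX_def by simp
  finally show ?thesis using p0 by simp
qed

end

lemma modlin: "((x::int) mod m + c * (y mod m)) mod m = (x + c * y) mod m"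
  by (metis mod_add_eq mod_mult_right_eq mod_mod_trivial)

context pglsetup
begin

lemma key2:
  assumes g: "g permutes I" and s: "s \<in> Vs" and sn: "s \<noteq> (\<lambda>_. 0)"
    and Vg: "\<And>i. i \<in> I \<Longrightarrow> V (g i) = Fp_add p (V i) s"
    and a: "a \<in> charX N" and ag: "\<And>i. i \<in> I \<Longrightarrow> a (g i) = a i"
  shows "eps a = (\<lambda>_. 0)"
proof -
  obtain k0 where k0: "s k0 \<noteq> 0" using sn by auto
  have nd0: "\<not> int p dvd s k" if "s k \<noteq> 0" for k
  proof
    assume "int p dvd s k"
    then have "int p \<le> s k" using Fp_range[OF s, of k] that by (simp add: zdvd_imp_le)
    then show False using Fp_range[OF s, of k] by simp
  qed
  let ?X = "\<lambda>k. \<Sum>i\<in>I. a i * V i k"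
  have gen: "(?X k + c * ?X k0) mod int p = 0" if c: "c = (if s k = 0 then 1 else 0)" for k c
  proof -
    let ?L = "\<lambda>i. V i k + c * V i k0"
    let ?\<sigma> = "s k + c * s k0"
    have nd: "\<not> int p dvd ?\<sigma>" using nd0 k0 c by (cases "s k = 0") auto
    have Lg: "?L (g i) mod int p = (?L i + ?\<sigma>) mod int p" if i: "i \<in> I" for i
    proof -
      have "?L (g i) = (V i k + s k) mod int p + c * ((V i k0 + s k0) mod int p)"
        using Vg[OF i] by (simp add: Fp_add_def)
      then have "?L (g i) mod int p = ((V i k + s k) + c * (V i k0 + s k0)) mod int p"
        by (simp only: modlin)
      also have "\<dots> = (?L i + ?\<sigma>) mod int p" by (simp add: algebra_simps)
      finally show ?thesis .
    qed
    have "(\<Sum>i\<in>I. a i * (?L i mod int p)) = 0" by (rule key1[where L="?L", OF g nd Lg a ag])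
    then have "(\<Sum>i\<in>I. a i * ?L i) mod int p = 0" using sum_mod_inner[where c=a and f="?L" and A=I and m="int p"] by simp
    moreover have "(\<Sum>i\<in>I. a i * ?L i) = ?X k + c * ?X k0"
      by (simp add: distrib_left sum.distrib sum_distrib_left algebra_simps)
    ultimately show ?thesis by simp
  qed
  have X0: "?X k0 mod int p = 0" using gen[where k=k0 and c=0] k0 by simp
  show ?thesis
  proof
    fix k
    let ?c = "if s k = 0 then 1 else (0::int)"
    have "(?X k + ?c * ?X k0) mod int p = 0" using gen by simp
    then have "int p dvd ?X k + ?c * ?X k0" by (simp add: mod_eq_0_iff_dvd)
    moreover have "int p dvd ?c * ?X k0" using X0 by (simp add: mod_eq_0_iff_dvd)
    ultimately have "int p dvd ?X k" by (simp add: dvd_add_left_iff)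
    then show "eps a k = 0" unfolding eps_def by (simp add: mod_eq_0_iff_dvd)
  qed
qed

lemma free:
  assumes a: "a \<in> charX N" and an: "eps a \<noteq> (\<lambda>_. 0)"
    and w: "w \<in> Weps N eps" and w': "w' \<in> Weps N eps" and eq: "wact w a = wact w' a"
  shows "w = w'"
proof -
  define t where "t = V (w j0)"
  define t' where "t' = V (w' j0)"
  have wp: "w permutes I" using Weps_char(1)[OF w] .
  have wp': "w' permutes I" using Weps_char(1)[OF w'] .
  have tV: "t \<in> Vs" unfolding t_def using VI permutes_in_image[OF wp] j0 by simp
  have tV': "t' \<in> Vs" unfolding t'_def using VI permutes_in_image[OF wp'] j0 by simp
  have ww: "w = tr t" "w' = tr t'" unfolding t_def t'_def using Weps_tr w w' by auto
  show ?thesis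
  proof (rule ccontr)
    assume ne: "w \<noteq> w'"
    then have tne: "t \<noteq> t'" using ww by auto
    define s where "s = (\<lambda>k. (t k - t' k) mod int p)"
    have sV: "s \<in> Vs" unfolding s_def
    proof (rule Fp_vec_memI[OF p0, where w="\<lambda>k. t k - t' k"])
      fix k :: nat assume "k \<notin> {1..n}"
      then show "(t k - t' k) mod int p = 0" using Fp_vec_outside[OF tV] Fp_vec_outside[OF tV'] by simp
    qed simp
    have sn: "s \<noteq> (\<lambda>_. 0)"
    proof
      assume "s = (\<lambda>_. 0)"
      then have "(t k - t' k) mod int p = 0" for k unfolding s_def by metis
      then have "t k mod int p = t' k mod int p" for k by (simp add: mod_eq_dvd_iff mod_eq_0_iff_dvd)
      then have "t = t'" using Fp_vec_eqI tV tV' by metis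
      then show False using tne by simp
    qed
    define g where "g = inv' w' \<circ> w"
    have gp: "g permutes I" unfolding g_def using permutes_compose[OF wp permutes_inv[OF wp']] .
    have Vg: "V (g i) = Fp_add p (V i) s" if i: "i \<in> I" for i
    proof -
      let ?j = "g i"
      have jI: "?j \<in> I" using permutes_in_image[OF gp] i by simp
      have wj: "w' ?j = w i" unfolding g_def using permutes_inverses(1)[OF wp'] by simp
      have e1: "V (w' ?j) = Fp_add p (V ?j) t'" using Weps_char(2)[OF w' jI] t'_def by simp
      have e2: "V (w i) = Fp_add p (V i) t" using Weps_char(2)[OF w i] t_def by simp
      show ?thesis
      proof
        fix k
        have "(V ?j k + t' k) mod int p = (V i k + t k) mod int p"
          using e1 e2 wj unfolding Fp_add_def by metis
        then have "int p dvd (V ?j k + t' k) - (V i k + t k)" by (simp add: mod_eq_dvd_iff)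
        then have "int p dvd V ?j k - (V i k + (t k - t' k))" by (simp add: algebra_simps)
        then have "V ?j k mod int p = (V i k + (t k - t' k)) mod int p" by (simp add: mod_eq_dvd_iff)
        then have "V ?j k = (V i k + s k) mod int p"
          using Fp_vec_mod[OF VI[OF jI]] unfolding s_def by (simp add: mod_add_right_eq)
        then show "V ?j k = Fp_add p (V i) s k" unfolding Fp_add_def by simp
      qed
    qed
    have ag: "a (g i) = a i" if i: "i \<in> I" for i
    proof -
      have "wact w a (w i) = wact w' a (w i)" using eq by simp
      then show ?thesis unfolding wact_apply g_def using permutes_inverses(2)[OF wp] by simp
    qed
    have "eps a = (\<lambda>_. 0)" by (rule key2[OF gp sV sn Vg a ag])
    then show False using an by simp
  qed
qed

end

lemma int_spanI: "finite F \<Longrightarrow> F \<subseteq> A \<Longrightarrow> (\<lambda>i. \<Sum>a\<in>F. c a * a i) \<in> int_span A"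
  unfolding int_span_def by blast

lemma int_span_zero: "(0 :: nat \<Rightarrow> int) \<in> int_span A"
proof -
  have "(0 :: nat \<Rightarrow> int) = (\<lambda>i. \<Sum>a\<in>{}. (\<lambda>_. 0) a * a i)" by (simp add: fun_eq_iff)
  moreover have "(\<lambda>i. \<Sum>a\<in>{}. (\<lambda>_. 0) a * a i) \<in> int_span A" by (rule int_spanI) auto
  ultimately show ?thesis by simp
qed

lemma int_span_add:
  assumes x: "x \<in> int_span A" and y: "y \<in> int_span A"
  shows "x + y \<in> int_span A"
proof -
  obtain F c where F: "finite F" "F \<subseteq> A" "x = (\<lambda>i. \<Sum>a\<in>F. c a * a i)" using x unfolding int_span_def by blast
  obtain G d where G: "finite G" "G \<subseteq> A" "y = (\<lambda>i. \<Sum>a\<in>G. d a * a i)" using y unfolding int_span_def by blast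
  define e where "e = (\<lambda>a. (if a \<in> F then c a else 0) + (if a \<in> G then d a else 0))"
  have "(\<Sum>a\<in>F \<union> G. e a * a i) = (\<Sum>a\<in>F. c a * a i) + (\<Sum>a\<in>G. d a * a i)" for i
  proof -
    have "(\<Sum>a\<in>F \<union> G. e a * a i) = (\<Sum>a\<in>F \<union> G. (if a \<in> F then c a * a i else 0)) + (\<Sum>a\<in>F \<union> G. (if a \<in> G then d a * a i else 0))"
      unfolding sum.distrib[symmetric] by (rule sum.cong) (auto simp: e_def distrib_right)
    also have "\<dots> = (\<Sum>a\<in>F. c a * a i) + (\<Sum>a\<in>G. d a * a i)"
      using F(1) G(1) by (simp add: sum.inter_restrict[symmetric] Int_absorb1 Int_absorb2 Int_commute)
    finally show ?thesis .
  qed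
  then have "x + y = (\<lambda>i. \<Sum>a\<in>F \<union> G. e a * a i)" using F(3) G(3) by (simp add: fun_eq_iff)
  moreover have "(\<lambda>i. \<Sum>a\<in>F \<union> G. e a * a i) \<in> int_span A" by (rule int_spanI) (use F G in auto)
  ultimately show ?thesis by simp
qed

lemma int_span_neg:
  assumes x: "x \<in> int_span A"
  shows "- x \<in> int_span A"
proof -
  obtain F c where F: "finite F" "F \<subseteq> A" "x = (\<lambda>i. \<Sum>a\<in>F. c a * a i)" using x unfolding int_span_def by blast
  have "- x = (\<lambda>i. \<Sum>a\<in>F. (- c a) * a i)" using F(3) by (simp add: fun_eq_iff sum_negf)
  moreover have "(\<lambda>i. \<Sum>a\<in>F. (- c a) * a i) \<in> int_span A" by (rule int_spanI) (use F in auto)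
  ultimately show ?thesis by simp
qed

lemma int_span_sub:
  assumes A: "A \<subseteq> charX N"
  shows "int_span A \<subseteq> charX N"
proof
  fix x assume "x \<in> int_span A"
  then obtain F c where F: "finite F" "F \<subseteq> A" "x = (\<lambda>i. \<Sum>a\<in>F. c a * a i)" unfolding int_span_def by blast
  have out: "x i = 0" if i: "i \<notin> {1..N}" for i
  proof -
    have "\<forall>a\<in>F. a i = 0" using F(2) A i unfolding charX_def by blast
    then show ?thesis using F(3) by (simp add: sum.neutral)
  qed
  have "(\<Sum>i=1..N. x i) = (\<Sum>a\<in>F. c a * (\<Sum>i=1..N. a i))"
    unfolding F(3) sum_distrib_left by (rule sum.swap)
  also have "\<dots> = 0"
  proof (rule sum.neutral, rule ballI)
    fix a assume "a \<in> F"
    then have "(\<Sum>i=1..N. a i) = 0" using F(2) A unfolding charX_def by blast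
    then show "c a * (\<Sum>i=1..N. a i) = 0" by simp
  qed
  finally show "x \<in> charX N" using out unfolding charX_def by simp
qed

context pglsetup
begin

lemma eps_span:
  "eps (\<lambda>i. \<Sum>a\<in>F. c a * a i) = (\<lambda>k. (\<Sum>a\<in>F. c a * eps a k) mod int p)"
proof
  fix k
  have "(\<Sum>i\<in>I. (\<Sum>a\<in>F. c a * a i) * V i k) = (\<Sum>a\<in>F. c a * (\<Sum>i\<in>I. a i * V i k))"
    unfolding sum_distrib_right sum_distrib_left mult.assoc by (rule sum.swap)
  then have "eps (\<lambda>i. \<Sum>a\<in>F. c a * a i) k = (\<Sum>a\<in>F. c a * (\<Sum>i\<in>I. a i * V i k)) mod int p"
    unfolding eps_def by simp
  also have "\<dots> = (\<Sum>a\<in>F. c a * eps a k) mod int p"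
    unfolding eps_def using sum_mod_inner[where c=c and A=F and m="int p" and f="\<lambda>a. \<Sum>i\<in>I. a i * V i k"]
    by simp
  finally show "eps (\<lambda>i. \<Sum>a\<in>F. c a * a i) k = (\<Sum>a\<in>F. c a * eps a k) mod int p" .
qed

lemma eps_pmul: "eps (\<lambda>i. int p * y i) = (\<lambda>_. 0)"
  unfolding eps_def by (simp add: sum_distrib_left[symmetric] mult.assoc)

lemma Fp_add_0r: "u \<in> Vs \<Longrightarrow> Fp_add p u (\<lambda>_. 0) = u"
  unfolding Fp_add_def using Fp_vec_mod by auto

lemma lower:
  assumes adm: "admissible_gen N p (Weps N eps) A"
  shows "n * N \<le> card A"
proof -
  have finA: "finite A" and subA: "A \<subseteq> charX N"
    and invA: "\<And>w a. w \<in> Weps N eps \<Longrightarrow> a \<in> A \<Longrightarrow> wact w a \<in> A"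
    and finC: "finite (cosets_in (charX N) (int_span A))"
    and cop: "coprime (card (cosets_in (charX N) (int_span A))) p"
    using adm unfolding admissible_gen_def by auto
  have X0: "(0 :: nat \<Rightarrow> int) \<in> charX N" using charX_0 by (simp add: zero_fun_def)
  have decomp: "\<exists>y\<in>charX N. \<exists>h\<in>int_span A. x = h + (\<lambda>i. int p * y i)" if x: "x \<in> charX N" for x
    by (rule index_coprime_lemma[OF X0 charX_add charX_neg int_span_sub[OF subA] int_span_zero
          int_span_add int_span_neg finC cop x]) (use p0 in auto)
  define B where "B = eps ` A - {\<lambda>_. 0}"
  have finB: "finite B" unfolding B_def using finA by simp
  define \<Phi> where "\<Phi> = (\<lambda>d. \<lambda>k. (\<Sum>b\<in>B. b k * d b) mod int p)"
  have span: "Vs \<subseteq> \<Phi> ` PiE B (\<lambda>_. {0..<int p})"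
  proof
    fix v assume v: "v \<in> Vs"
    obtain x where x: "x \<in> charX N" "eps x = v" using eps_surj v by blast
    obtain y h where yh: "y \<in> charX N" "h \<in> int_span A" "x = h + (\<lambda>i. int p * y i)" using decomp[OF x(1)] by blast
    obtain F c where F: "finite F" "F \<subseteq> A" "h = (\<lambda>i. \<Sum>a\<in>F. c a * a i)" using yh(2) unfolding int_span_def by blast
    have "x = (\<lambda>i. h i + int p * y i)" using yh(3) by (simp add: fun_eq_iff)
    then have "eps x = Fp_add p (eps h) (eps (\<lambda>i. int p * y i))" using eps_add by simp
    then have vh: "v = eps h" using x(2) eps_pmul Fp_add_0r[OF eps_in] by simp
    define e where "e = (\<lambda>b. \<Sum>a\<in>{a\<in>F. eps a = b}. c a)"
    have regroup: "(\<Sum>a\<in>F. c a * eps a k) = (\<Sum>b\<in>B. b k * e b)" for k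
    proof -
      have "(\<Sum>a\<in>F. c a * eps a k) = (\<Sum>b\<in>eps ` F. \<Sum>a\<in>{a\<in>F. eps a = b}. c a * eps a k)"
        by (rule sum.image_gen[OF F(1)])
      also have "\<dots> = (\<Sum>b\<in>eps ` F. b k * e b)"
        unfolding e_def by (rule sum.cong[OF refl]) (simp add: sum_distrib_left mult.commute)
      also have "\<dots> = (\<Sum>b\<in>eps ` A. b k * e b)"
      proof (rule sum.mono_neutral_left)
        show "\<forall>b\<in>eps ` A - eps ` F. b k * e b = 0"
        proof
          fix b assume "b \<in> eps ` A - eps ` F"
          then have em: "{a\<in>F. eps a = b} = {}" by (auto simp del: Set.image_iff) (metis imageI)
          show "b k * e b = 0" unfolding e_def em by simp
        qed
      qed (use finA F in auto)
      also have "\<dots> = (\<Sum>b\<in>B. b k * e b)"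
        unfolding B_def by (rule sum.mono_neutral_right) (use finA in auto)
      finally show ?thesis .
    qed
    define d where "d = restrict (\<lambda>b. e b mod int p) B"
    have dP: "d \<in> PiE B (\<lambda>_. {0..<int p})" unfolding d_def using p0 by auto
    have "\<Phi> d = v"
    proof
      fix k
      have "\<Phi> d k = (\<Sum>b\<in>B. b k * (e b mod int p)) mod int p"
        unfolding \<Phi>_def d_def by (simp cong: sum.cong)
      also have "\<dots> = (\<Sum>b\<in>B. b k * e b) mod int p" by (rule sum_mod_inner)
      also have "\<dots> = v k" using vh F(3) eps_span regroup by simp
      finally show "\<Phi> d k = v k" .
    qed
    then show "v \<in> \<Phi> ` PiE B (\<lambda>_. {0..<int p})" using dP by blast
  qed
  have "p ^ n \<le> card (\<Phi> ` PiE B (\<lambda>_. {0..<int p}))"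
    using card_mono[OF _ span] card_Fp_vec[OF p0] finB by (simp add: finite_PiE)
  also have "\<dots> \<le> card (PiE B (\<lambda>_. {0..<int p}))" by (rule card_image_le) (simp add: finite_PiE finB)
  also have "\<dots> = p ^ card B" using finB by (simp add: card_PiE)
  finally have nB: "n \<le> card B" using power_le_imp_le_exp[OF p1] by blast
  define Ab where "Ab = (\<lambda>b. {a\<in>A. eps a = b})"
  have fib: "N \<le> card (Ab b)" if b: "b \<in> B" for b
  proof -
    obtain a where a: "a \<in> A" "eps a = b" using b unfolding B_def by blast
    have an: "eps a \<noteq> (\<lambda>_. 0)" using a b unfolding B_def by simp
    have ac: "a \<in> charX N" using a subA by blast
    have inj: "inj_on (\<lambda>w. wact w a) (Weps N eps)"
      by (rule inj_onI) (rule free[OF ac an], auto)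
    have img: "(\<lambda>w. wact w a) ` Weps N eps \<subseteq> Ab b"
      unfolding Ab_def using invA a ac unfolding Weps_def by auto
    have "card (Weps N eps) \<le> card (Ab b)"
      by (rule card_inj_on_le[OF inj img]) (simp add: Ab_def finA)
    then show ?thesis using card_Weps by simp
  qed
  have "card (\<Union>(Ab ` B)) = (\<Sum>b\<in>B. card (Ab b))"
    by (rule card_UN_disjoint[OF finB]) (auto simp: Ab_def finA)
  also have "\<dots> \<ge> (\<Sum>b\<in>B. N)" using fib by (meson sum_mono)
  finally have "card B * N \<le> card (\<Union>(Ab ` B))" by simp
  also have "\<dots> \<le> card A" by (rule card_mono[OF finA]) (auto simp: Ab_def)
  finally show ?thesis using nB by (meson le_trans mult_le_mono1)
qed

lemma Rank_lower: "n * N \<le> Rank N p (Weps N eps)"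
proof -
  have ex: "\<exists>m A. admissible_gen N p (Weps N eps) A \<and> card A = m" using roots_adm by blast
  obtain A where A: "admissible_gen N p (Weps N eps) A" "card A = Rank N p (Weps N eps)"
    using LeastI_ex[OF ex] unfolding Rank_def by blast
  have "n * N \<le> card A" by (rule lower[OF A(1)])
  then show ?thesis using A(2) by linarith
qed

end

theorem proposition14p1:
  fixes p n :: nat
  assumes "prime p" and "CHAR('k::field) \<noteq> p" and "n \<ge> 1"
  shows "\<exists>\<epsilon> P. is_hom_to_Fp (p ^ n) p n \<epsilon> \<and>
           \<epsilon> ` charX (p ^ n) = Fp_vec p n \<and>
           (\<forall>\<alpha>\<in>roots (p ^ n). \<epsilon> \<alpha> \<noteq> (\<lambda>_. 0)) \<and>
           is_sylow (p ^ n) p (Weps (p ^ n) \<epsilon>) P \<and>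
           {\<chi> \<in> charX (p ^ n). \<forall>w\<in>P. wact w \<chi> = \<chi>} = {\<lambda>_. 0} \<and>
           Rank (p ^ n) p P \<ge> n * p ^ n"
proof -
  have p0: "p > 0" using assms(1) prime_gt_0_nat by blast
  have cV: "finite (Fp_vec p n)" "card (Fp_vec p n) = p ^ n" using card_Fp_vec[OF p0] by auto
  obtain V where Vb: "bij_betw V {1..p^n} (Fp_vec p n)"
    using finite_same_card_bij[of "{1..p^n}" "Fp_vec p n"] cV by auto
  have z: "(\<lambda>_. 0) \<in> Fp_vec p n" using p0 unfolding Fp_vec_def by auto
  define j0 where "j0 = inv_into {1..p^n} V (\<lambda>_. 0)"
  have zi: "(\<lambda>_. 0) \<in> V ` {1..p^n}" using Vb z unfolding bij_betw_def by simp
  have j0: "j0 \<in> {1..p^n}" unfolding j0_def by (rule inv_into_into[OF zi])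
  have Vj0: "V j0 = (\<lambda>_. 0)" unfolding j0_def by (rule f_inv_into_f[OF zi])
  interpret S: pglsetup p n V j0
    by (unfold_locales) (use assms Vb j0 Vj0 in auto)
  have hom: "is_hom_to_Fp (p ^ n) p n S.eps"
    unfolding is_hom_to_Fp_def using S.eps_in S.eps_add by auto
  have im: "S.eps ` charX (p ^ n) = Fp_vec p n" using S.eps_in S.eps_surj by auto
  show ?thesis
    using hom im S.eps_roots S.Weps_sylow S.Weps_fixed S.Rank_lower by blast
qed

end
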